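(* Let $(b,c)$ be a connected graph over a countable set $X$ with an action of a group $G$ such that $H=H_{b,c}$ is $G$-invariant, fix $x_0\in X$, let $R\subseteq G$ be a subgroup, and let $f\in\mathcal{K}^R$ be harmonic. Let $\mu_f$ be a Borel probability measure on $\mathrm{ex}\,\mathcal{K}^R$ representing $f$ (as provided by Choquet's theorem), i.e. $f(x)=\int_{\mathrm{ex}\,\mathcal{K}^R}k(x)\,d\mu_f(k)$ for all $x\in X$. Then the set $\{k\in\mathrm{ex}\,\mathcal{K}^R: Hk\neq0\}$ is a $\mu_f$-null set.
   Context: A graph over $X$ is $(b,c)$ with $b:X\times X\to[0,\infty)$, $c:X\to\mathbb{R}$, $\sum_yb(x,y)<\infty$ ($b$ need not be symmetric); connected: any two points are joined by a finite sequence $y_1,\dots,y_n$ with $b(y_i,y_{i+1})>0$. $C(X)$ carries the product topology. $H_{b,c}f(x)=\sum_yb(x,y)(f(x)-f(y))+c(x)f(x)$ on $\mathrm{Dom}(H)=\{f:\sum_yb(x,y)|f(y)|<\infty\ \forall x\}$; harmonic: $Hf=0$; $\mathcal{H}^+$: nonnegative nonzero harmonic functions. $T_gf(x)=f(g^{-1}x)$; $H$ is $G$-invariant if $T_g$ preserves $\mathrm{Dom}(H)$ and $HT_g=T_gH$. $\mathcal{K}$ is the closure in $C(X)$ of $\{f\in\mathcal{H}^+:f(x_0)=1\}$ (a compact convex set), and $\mathcal{K}^R=\{f\in\mathcal{K}: T_gf=f\ \forall g\in R\}$; $\mathrm{ex}$ denotes the set of extreme points. *)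

theory Defs
  imports "HOL-Probability.Probability" "HOL-Algebra.Group_Action"
begin

text \<open>Graphs (b,c) over a countable type 'x; functions 'x \<Rightarrow> real carry the
 product topology (HOL-Analysis Function_Topology).\<close>

definition is_graph :: "('x \<Rightarrow> 'x \<Rightarrow> real) \<Rightarrow> bool" where
  "is_graph b \<longleftrightarrow> (\<forall>x y. b x y \<ge> 0) \<and> (\<forall>x. (b x) summable_on UNIV)"

definition graph_connected :: "('x \<Rightarrow> 'x \<Rightarrow> real) \<Rightarrow> bool" where
  "graph_connected b \<longleftrightarrow> (\<forall>x y. (\<lambda>u v. b u v > 0)\<^sup>*\<^sup>* x y)"

definition domH :: "('x \<Rightarrow> 'x \<Rightarrow> real) \<Rightarrow> ('x \<Rightarrow> real) set" where
  "domH b = {f. \<forall>x. (\<lambda>y. b x y * \<bar>f y\<bar>) summable_on UNIV}"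

definition opH :: "('x \<Rightarrow> 'x \<Rightarrow> real) \<Rightarrow> ('x \<Rightarrow> real) \<Rightarrow> ('x \<Rightarrow> real) \<Rightarrow> 'x \<Rightarrow> real" where
  "opH b c f x = (\<Sum>\<^sub>\<infinity>y. b x y * (f x - f y)) + c x * f x"

definition harmonic :: "('x \<Rightarrow> 'x \<Rightarrow> real) \<Rightarrow> ('x \<Rightarrow> real) \<Rightarrow> ('x \<Rightarrow> real) \<Rightarrow> bool" where
  "harmonic b c f \<longleftrightarrow> f \<in> domH b \<and> opH b c f = (\<lambda>_. 0)"

definition posharm :: "('x \<Rightarrow> 'x \<Rightarrow> real) \<Rightarrow> ('x \<Rightarrow> real) \<Rightarrow> ('x \<Rightarrow> real) set" where
  "posharm b c = {f. harmonic b c f \<and> (\<forall>x. f x \<ge> 0) \<and> f \<noteq> (\<lambda>_. 0)}"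

definition transl :: "('g, 'm) monoid_scheme \<Rightarrow> ('g \<Rightarrow> 'x \<Rightarrow> 'x) \<Rightarrow> 'g \<Rightarrow> ('x \<Rightarrow> real) \<Rightarrow> 'x \<Rightarrow> real" where
  "transl G \<phi> g f x = f (\<phi> (inv\<^bsub>G\<^esub> g) x)"

definition G_invariant :: "('g, 'm) monoid_scheme \<Rightarrow> ('g \<Rightarrow> 'x \<Rightarrow> 'x) \<Rightarrow>
    ('x \<Rightarrow> 'x \<Rightarrow> real) \<Rightarrow> ('x \<Rightarrow> real) \<Rightarrow> bool" where
  "G_invariant G \<phi> b c \<longleftrightarrow> (\<forall>g \<in> carrier G.
      transl G \<phi> g ` domH b \<subseteq> domH b \<and>
      (\<forall>f \<in> domH b. opH b c (transl G \<phi> g f) = transl G \<phi> g (opH b c f)))"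

definition Kset :: "('x \<Rightarrow> 'x \<Rightarrow> real) \<Rightarrow> ('x \<Rightarrow> real) \<Rightarrow> 'x \<Rightarrow> ('x \<Rightarrow> real) set" where
  "Kset b c x0 = closure {f \<in> posharm b c. f x0 = 1}"

definition KsetR :: "('x \<Rightarrow> 'x \<Rightarrow> real) \<Rightarrow> ('x \<Rightarrow> real) \<Rightarrow> 'x \<Rightarrow>
    ('g, 'm) monoid_scheme \<Rightarrow> ('g \<Rightarrow> 'x \<Rightarrow> 'x) \<Rightarrow> 'g set \<Rightarrow> ('x \<Rightarrow> real) set" where
  "KsetR b c x0 G \<phi> R = {f \<in> Kset b c x0. \<forall>g \<in> R. transl G \<phi> g f = f}"

definition extreme_points :: "('x \<Rightarrow> real) set \<Rightarrow> ('x \<Rightarrow> real) set" where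
  "extreme_points S = {k \<in> S. \<forall>u \<in> S. \<forall>v \<in> S. \<forall>t::real. 0 < t \<and> t < 1 \<and>
       k = (\<lambda>x. t * u x + (1 - t) * v x) \<longrightarrow> u = k \<and> v = k}"

end

theory Submission imports Defs begin

lemma opH_eq:
  assumes "is_graph b" "k \<in> domH b"
  shows "opH b c k x = ((\<Sum>\<^sub>\<infinity>y. b x y) + c x) * k x - (\<Sum>\<^sub>\<infinity>y. b x y * k y)"
proof -
  have s1: "b x summable_on UNIV" using assms(1) by (simp add: is_graph_def)
  have "(\<lambda>y. b x y * \<bar>k y\<bar>) summable_on UNIV" using assms(2) by (simp add: domH_def)
  moreover have "\<And>y. norm (b x y * k y) = b x y * \<bar>k y\<bar>"
    using assms(1) by (simp add: is_graph_def abs_mult)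
  ultimately have s2: "(\<lambda>y. b x y * k y) summable_on UNIV"
    using summable_on_iff_abs_summable_on_real by (metis (no_types, lifting) summable_on_cong)
  have "(\<Sum>\<^sub>\<infinity>y. b x y * (k x - k y)) = (\<Sum>\<^sub>\<infinity>y. b x y * k x + - (b x y * k y))"
    by (simp add: algebra_simps)
  also have "\<dots> = (\<Sum>\<^sub>\<infinity>y. b x y * k x) + (\<Sum>\<^sub>\<infinity>y. - (b x y * k y))"
    by (rule infsum_add) (simp_all add: summable_on_cmult_left[OF s1] summable_on_uminus s2)
  also have "\<dots> = (\<Sum>\<^sub>\<infinity>y. b x y) * k x - (\<Sum>\<^sub>\<infinity>y. b x y * k y)"
    using s1 by (simp add: infsum_cmult_left infsum_uminus)
  finally show ?thesis by (simp add: opH_def algebra_simps)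
qed

definition Cset :: "('x \<Rightarrow> 'x \<Rightarrow> real) \<Rightarrow> ('x \<Rightarrow> real) \<Rightarrow> ('x \<Rightarrow> real) set" where
  "Cset b c = {k. (\<forall>y. 0 \<le> k y) \<and> (\<forall>x F. finite F \<longrightarrow>
      (\<Sum>y\<in>F. b x y * k y) \<le> ((\<Sum>\<^sub>\<infinity>y. b x y) + c x) * k x)}"

lemma closed_Cset: "closed (Cset b c)"
  unfolding Cset_def
  by (intro closed_Collect_conj closed_Collect_all closed_Collect_imp closed_Collect_le
      open_Collect_const continuous_intros continuous_on_product_then_coordinatewise continuous_on_id)

lemma posharm_Cset:
  assumes "is_graph b" "h \<in> posharm b c"
  shows "h \<in> Cset b c"
proof -
  have h: "harmonic b c h" "\<And>y. 0 \<le> h y" using assms(2) by (auto simp: posharm_def)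
  have dom: "h \<in> domH b" using h by (simp add: harmonic_def)
  { fix x F assume F: "finite (F::'a set)"
    have "\<And>y. \<bar>h y\<bar> = h y" using h by simp
    then have s2: "(\<lambda>y. b x y * h y) summable_on UNIV" using dom by (simp add: domH_def)
    have "(\<Sum>y\<in>F. b x y * h y) \<le> (\<Sum>\<^sub>\<infinity>y. b x y * h y)"
      by (rule finite_sum_le_infsum) (use s2 F assms(1) h in \<open>auto simp: is_graph_def\<close>)
    also have "\<dots> = ((\<Sum>\<^sub>\<infinity>y. b x y) + c x) * h x"
      using opH_eq[OF assms(1) dom, of c x] h(1) unfolding harmonic_def by (metis eq_iff_diff_eq_0)
    finally have "(\<Sum>y\<in>F. b x y * h y) \<le> ((\<Sum>\<^sub>\<infinity>y. b x y) + c x) * h x" . }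
  then show ?thesis using h by (auto simp: Cset_def)
qed

lemma Kset_Cset: "is_graph b \<Longrightarrow> Kset b c x0 \<subseteq> Cset b c"
  unfolding Kset_def by (rule closure_minimal) (use posharm_Cset closed_Cset in auto)

lemma Cset_props:
  assumes "is_graph b" "k \<in> Cset b c"
  shows "k \<in> domH b" "(\<lambda>y. b x y * k y) summable_on UNIV"
    "(\<Sum>\<^sub>\<infinity>y. b x y * k y) \<le> ((\<Sum>\<^sub>\<infinity>y. b x y) + c x) * k x"
    "0 \<le> (\<Sum>\<^sub>\<infinity>y. b x y * k y)"
proof -
  have k: "\<And>y. 0 \<le> k y" using assms(2) by (auto simp: Cset_def)
  have bn: "\<And>y. 0 \<le> b x y" using assms(1) by (auto simp: is_graph_def)
  have bd: "\<And>F. finite F \<Longrightarrow> (\<Sum>y\<in>F. b x y * k y) \<le> ((\<Sum>\<^sub>\<infinity>y. b x y) + c x) * k x"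
    using assms(2) by (auto simp: Cset_def)
  show s: "(\<lambda>y. b x y * k y) summable_on UNIV"
    by (rule nonneg_bdd_above_summable_on) (use k bn bd in \<open>auto intro!: bdd_aboveI\<close>)
  show "(\<Sum>\<^sub>\<infinity>y. b x y * k y) \<le> ((\<Sum>\<^sub>\<infinity>y. b x y) + c x) * k x"
    by (rule infsum_le_finite_sums[OF s]) (use bd in auto)
  show "0 \<le> (\<Sum>\<^sub>\<infinity>y. b x y * k y)" by (rule infsum_nonneg) (use k bn in auto)
  show "k \<in> domH b"
  proof -
    { fix x
      have "(\<lambda>y. b x y * k y) summable_on UNIV"
        by (rule nonneg_bdd_above_summable_on)
          (use k assms in \<open>auto intro!: bdd_aboveI simp: Cset_def is_graph_def\<close>)
      then have "(\<lambda>y. b x y * \<bar>k y\<bar>) summable_on UNIV" using k by simp }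
    then show ?thesis by (simp add: domH_def)
  qed
qed

definition Fn :: "nat \<Rightarrow> 'x::countable set" where "Fn n = {y. to_nat y < n}"

lemma finite_Fn: "finite (Fn n)"
proof -
  have "Fn n = to_nat -` {..<n}" by (auto simp: Fn_def)
  then show ?thesis by (metis finite_lessThan finite_vimageI inj_to_nat)
qed

lemma infsum_SUP_Fn:
  fixes g :: "'x::countable \<Rightarrow> real"
  assumes "g summable_on UNIV" "\<And>y. 0 \<le> g y"
  shows "ennreal (infsum g UNIV) = (SUP n. ennreal (sum g (Fn n)))"
proof -
  have eq: "ennreal (infsum g UNIV) = (SUP F\<in>{F. finite F \<and> F \<subseteq> UNIV}. ennreal (sum g F))"
    by (rule infsum_nonneg_is_SUPREMUM_ennreal) (use assms in auto)
  show ?thesis unfolding eq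
  proof (rule antisym)
    show "(SUP F\<in>{F. finite F \<and> F \<subseteq> UNIV}. ennreal (sum g F)) \<le> (SUP n. ennreal (sum g (Fn n)))"
    proof (rule SUP_least)
      fix F :: "'x set" assume "F \<in> {F. finite F \<and> F \<subseteq> UNIV}"
      then have F: "finite F" by simp
      define n where "n = Suc (\<Sum>y\<in>F. to_nat y)"
      have "F \<subseteq> Fn n" using F by (auto simp: Fn_def n_def intro!: le_imp_less_Suc member_le_sum)
      then have "sum g F \<le> sum g (Fn n)" by (intro sum_mono2 finite_Fn) (use assms in auto)
      then show "ennreal (sum g F) \<le> (SUP n. ennreal (sum g (Fn n)))"
        by (intro SUP_upper2[of n]) (auto intro: ennreal_leI)
    qed
  next
    show "(SUP n. ennreal (sum g (Fn n))) \<le> (SUP F\<in>{F. finite F \<and> F \<subseteq> UNIV}. ennreal (sum g F))"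
      by (intro SUP_least SUP_upper) (auto simp: finite_Fn)
  qed
qed


theorem lemma3:
  fixes b :: "'x::countable \<Rightarrow> 'x \<Rightarrow> real" and c :: "'x \<Rightarrow> real"
    and G (structure) and \<phi> :: "'g \<Rightarrow> 'x \<Rightarrow> 'x" and R :: "'g set"
    and x0 :: 'x and f :: "'x \<Rightarrow> real" and M :: "('x \<Rightarrow> real) measure"
  assumes "is_graph b" and "graph_connected b"
    and "group_action G UNIV \<phi>"
    and "G_invariant G \<phi> b c"
    and "subgroup R G"
    and "f \<in> KsetR b c x0 G \<phi> R" and "harmonic b c f"
    and "prob_space M"
    and "sets M = sets (restrict_space borel (extreme_points (KsetR b c x0 G \<phi> R)))"
    and "space M = extreme_points (KsetR b c x0 G \<phi> R)"
    and "\<forall>x. ennreal (f x) = (\<integral>\<^sup>+ k. ennreal (k x) \<partial>M)"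
  shows "{k \<in> extreme_points (KsetR b c x0 G \<phi> R). \<not> harmonic b c k} \<in> null_sets M"
proof -
  let ?\<Omega> = "extreme_points (KsetR b c x0 G \<phi> R)"
  have gr: "is_graph b" by fact
  have OC: "k \<in> Cset b c" if "k \<in> space M" for k
    using that Kset_Cset[OF gr, of c x0] assms(10)
    by (auto simp: extreme_points_def KsetR_def)
  have fC: "f \<in> Cset b c" using assms(6) Kset_Cset[OF gr, of c x0] by (auto simp: KsetR_def)
  have bn: "\<And>x y. 0 \<le> b x y" using gr by (auto simp: is_graph_def)
  have ev: "(\<lambda>k. k y) \<in> borel_measurable M" for y
  proof -
    have "(\<lambda>k::'x\<Rightarrow>real. k y) \<in> borel_measurable (restrict_space borel ?\<Omega>)"
      by (rule measurable_restrict_space1, rule borel_measurable_continuous_onI,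
          rule continuous_on_product_coordinates)
    then show ?thesis using measurable_cong_sets[OF assms(9) refl] by blast
  qed
  define a where "a x = (\<Sum>\<^sub>\<infinity>y. b x y) + c x" for x
  define S where "S k x = (\<Sum>\<^sub>\<infinity>y. b x y * k y)" for k :: "'x \<Rightarrow> real" and x
  define h where "h x n k = (\<Sum>y\<in>Fn n. ennreal (b x y * k y))" for x n and k :: "'x \<Rightarrow> real"
  have h_meas: "h x n \<in> borel_measurable M" for x n
    unfolding h_def using ev by measurable
  have h_inc: "incseq (h x)" for x
    unfolding h_def
    by (intro monoI le_funI sum_mono2 finite_Fn) (auto simp: Fn_def)
  have S_sup: "ennreal (S k x) = (SUP n. h x n k)" if "k \<in> Cset b c" for k x
  proof -
    have k: "\<And>y. 0 \<le> k y" using that by (auto simp: Cset_def)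
    have "ennreal (S k x) = (SUP n. ennreal (\<Sum>y\<in>Fn n. b x y * k y))"
      unfolding S_def
      by (rule infsum_SUP_Fn) (use Cset_props(2)[OF gr that] k bn in auto)
    also have "\<dots> = (SUP n. h x n k)"
      unfolding h_def using k bn by (subst sum_ennreal[symmetric]) auto
    finally show ?thesis .
  qed
  have S_meas: "(\<lambda>k. S k x) \<in> borel_measurable M" for x
  proof -
    have "(\<lambda>k. enn2real (SUP n. h x n k)) \<in> borel_measurable M"
      using h_meas by measurable
    moreover have "S k x = enn2real (SUP n. h x n k)" if "k \<in> space M" for k
    proof -
      have "enn2real (SUP n. h x n k) = enn2real (ennreal (S k x))"
        using S_sup[OF OC[OF that], of x] by simp
      also have "\<dots> = S k x"
        using Cset_props(4)[OF gr OC[OF that], of x] unfolding S_def by simp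
      finally show ?thesis by simp
    qed
    ultimately show ?thesis by (subst measurable_cong[of M "\<lambda>k. S k x"]) auto
  qed
  have AE0: "AE k in M. a x * k x - S k x = 0" for x
  proof -
    have fdom: "f \<in> domH b" using assms(7) by (simp add: harmonic_def)
    have Sf: "S f x = a x * f x"
    proof -
      have "opH b c f x = 0" using assms(7) by (simp add: harmonic_def)
      then show ?thesis using opH_eq[OF gr fdom, of c x] unfolding S_def a_def by simp
    qed
    have "(\<integral>\<^sup>+ k. ennreal (S k x) \<partial>M) = (\<integral>\<^sup>+ k. (SUP n. h x n k) \<partial>M)"
      by (rule nn_integral_cong) (use S_sup OC in auto)
    also have "\<dots> = (SUP n. \<integral>\<^sup>+ k. h x n k \<partial>M)"
      by (rule nn_integral_monotone_convergence_SUP[OF h_inc h_meas])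
    also have "\<dots> = (SUP n. h x n f)"
    proof -
      have "(\<integral>\<^sup>+ k. h x n k \<partial>M) = h x n f" for n
      proof -
        have "(\<integral>\<^sup>+ k. h x n k \<partial>M) = (\<Sum>y\<in>Fn n. \<integral>\<^sup>+ k. ennreal (b x y * k y) \<partial>M)"
          unfolding h_def by (rule nn_integral_sum) (use ev in measurable)
        also have "\<dots> = (\<Sum>y\<in>Fn n. ennreal (b x y) * \<integral>\<^sup>+ k. ennreal (k y) \<partial>M)"
          by (intro sum.cong refl, subst nn_integral_cmult[symmetric])
            (use ev bn in \<open>auto simp: ennreal_mult' intro!: nn_integral_cong\<close>)
        also have "\<dots> = h x n f"
          unfolding h_def using assms(11) bn by (auto simp: ennreal_mult' intro!: sum.cong)
        finally show ?thesis .
      qed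
      then show ?thesis by simp
    qed
    also have "\<dots> = ennreal (S f x)" using S_sup[OF fC] by simp
    finally have IS: "(\<integral>\<^sup>+ k. ennreal (S k x) \<partial>M) = ennreal (a x * f x)" using Sf by simp
    have fx: "0 \<le> f x" using fC by (auto simp: Cset_def)
    have IA: "(\<integral>\<^sup>+ k. ennreal (a x * k x) \<partial>M) = ennreal (a x * f x)"
    proof (cases "0 \<le> a x")
      case True
      have "(\<integral>\<^sup>+ k. ennreal (a x * k x) \<partial>M) = (\<integral>\<^sup>+ k. ennreal (a x) * ennreal (k x) \<partial>M)"
        using True by (simp add: ennreal_mult')
      also have "\<dots> = ennreal (a x) * ennreal (f x)"
        using ev assms(11) by (simp add: nn_integral_cmult)
      finally show ?thesis using True by (simp add: ennreal_mult')
    next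
      case False
      have "(\<integral>\<^sup>+ k. ennreal (a x * k x) \<partial>M) = (\<integral>\<^sup>+ k. 0 \<partial>M)"
        by (rule nn_integral_cong)
          (use False OC in \<open>auto simp: Cset_def mult_nonpos_nonneg ennreal_eq_0_iff\<close>)
      moreover have "a x * f x \<le> 0" using False fx by (simp add: mult_nonpos_nonneg)
      ultimately show ?thesis by (simp add: ennreal_eq_0_iff)
    qed
    have spl: "ennreal (a x * k x - S k x) + ennreal (S k x) = ennreal (a x * k x)"
      if "k \<in> space M" for k
    proof -
      have "0 \<le> a x * k x - S k x" "0 \<le> S k x"
        using Cset_props(3,4)[OF gr OC[OF that], of x] unfolding S_def a_def by auto
      then have "ennreal (a x * k x - S k x) + ennreal (S k x) = ennreal ((a x * k x - S k x) + S k x)"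
        by (rule ennreal_plus[symmetric])
      then show ?thesis by simp
    qed
    have m1: "(\<lambda>k. ennreal (a x * k x - S k x)) \<in> borel_measurable M"
      using ev[measurable] S_meas[measurable] by measurable
    have m2: "(\<lambda>k. ennreal (S k x)) \<in> borel_measurable M"
      using S_meas[measurable] by measurable
    have "(\<integral>\<^sup>+ k. ennreal (a x * k x - S k x) \<partial>M) + ennreal (a x * f x) = ennreal (a x * f x)"
    proof -
      have "(\<integral>\<^sup>+ k. ennreal (a x * k x - S k x) \<partial>M) + (\<integral>\<^sup>+ k. ennreal (S k x) \<partial>M)
          = (\<integral>\<^sup>+ k. ennreal (a x * k x - S k x) + ennreal (S k x) \<partial>M)"
        by (rule nn_integral_add[OF m1 m2, symmetric])
      also have "\<dots> = (\<integral>\<^sup>+ k. ennreal (a x * k x) \<partial>M)"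
        by (rule nn_integral_cong) (rule spl)
      finally show ?thesis using IS IA by simp
    qed
    then have "(\<integral>\<^sup>+ k. ennreal (a x * k x - S k x) \<partial>M) = 0"
    proof -
      assume E: "(\<integral>\<^sup>+ k. ennreal (a x * k x - S k x) \<partial>M) + ennreal (a x * f x) = ennreal (a x * f x)"
      have "(\<integral>\<^sup>+ k. ennreal (a x * k x - S k x) \<partial>M)
          = ((\<integral>\<^sup>+ k. ennreal (a x * k x - S k x) \<partial>M) + ennreal (a x * f x)) - ennreal (a x * f x)"
        by (rule ennreal_add_diff_cancel_right[symmetric]) simp
      also have "\<dots> = 0" unfolding E by simp
      finally show ?thesis .
    qed
    then have "AE k in M. ennreal (a x * k x - S k x) = 0"
      using nn_integral_0_iff_AE[OF m1] by blast
    then show ?thesis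
    proof (rule AE_mp, intro AE_I2 impI)
      fix k assume k: "k \<in> space M" and z: "ennreal (a x * k x - S k x) = 0"
      have "0 \<le> a x * k x - S k x"
        using Cset_props(3)[OF gr OC[OF k], of x] unfolding S_def a_def by simp
      then show "a x * k x - S k x = 0" using z by (simp add: ennreal_eq_0_iff)
    qed
  qed
  have AEall: "AE k in M. \<forall>x. a x * k x - S k x = 0"
    by (subst AE_all_countable) (use AE0 in blast)
  have MS: "{k \<in> space M. \<not> (\<forall>x. a x * k x - S k x = 0)} \<in> sets M"
    using ev[measurable] S_meas[measurable] by measurable
  have N: "{k \<in> space M. \<not> (\<forall>x. a x * k x - S k x = 0)} \<in> null_sets M"
    using AE_iff_null[OF MS] AEall by (rule iffD1)
  have "{k \<in> ?\<Omega>. \<not> harmonic b c k} = {k \<in> space M. \<not> (\<forall>x. a x * k x - S k x = 0)}"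
  proof -
    have "harmonic b c k \<longleftrightarrow> (\<forall>x. a x * k x - S k x = 0)" if "k \<in> space M" for k
      using Cset_props(1)[OF gr OC[OF that]] opH_eq[OF gr Cset_props(1)[OF gr OC[OF that]]]
      unfolding harmonic_def a_def S_def by (auto simp: fun_eq_iff)
    then show ?thesis using assms(10) by auto
  qed
  then show ?thesis using N by simp
qed

end
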